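(* Let $P$ be an abelian group, $s\in\mathbb R_{>0}$, and $h\colon P\to\mathbb R$ such that for all $L_0,\dots,L_r\in P$, as $|m|\to\infty$ with $m\in\mathbb Z^r$, $h(\sum_im_iL_i)=O(|m|^s)$ and $h(L_0+\sum_im_iL_i)-h(\sum_im_iL_i)=O(|m|^{s-1})$. Let $\hat h\colon P_{\mathbb R}\to\mathbb R$ be the unique function with $\hat h(L)=\limsup_{m\to\infty}m^{-s}h(mL)$ for $L\in P$, homogeneous of degree $s$ under $\mathbb R_{\ge0}$, and continuous on finite-dimensional subspaces. Fix $L_1,\dots,L_r\in P$, write $\hat h(x)=\hat h(\sum_ix_iL_i)$ and $f_m(x)=m^{-s}h(\sum_i\lfloor mx_i\rfloor L_i)$ for $x\in\mathbb R^r$, $m\in\mathbb N_{>0}$. Then: (i) for all $x\in\mathbb R^r$, $\hat h(x)=\limsup_{m\to\infty}f_m(x)$; (ii) if $\sigma\subset\mathbb R^r$ is an open convex cone such that $\lim_{m\to\infty}f_m(x)=\hat h(x)$ for all $x\in\sigma\cap\mathbb Z^r$, then $\lim_{m\to\infty}f_m(x)=\hat h(x)$ for all $x\in\overline\sigma$.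
   Context: $P_{\mathbb R}=P\otimes_{\mathbb Z}\mathbb R$, the image of $L\in P$ is still written $L$, and $|m|=\sum_i|m_i|$; the implied constants may depend on $L_0,\dots,L_r$. *)

theory Defs
  imports "HOL-Analysis.Analysis"
begin

definition zsmult :: "int \<Rightarrow> 'a::ab_group_add \<Rightarrow> 'a" where
  "zsmult k a = (if 0 \<le> k then (\<Sum>j<nat k. a) else - (\<Sum>j<nat (- k). a))"

definition zlincomb :: "nat \<Rightarrow> (nat \<Rightarrow> int) \<Rightarrow> (nat \<Rightarrow> 'a::ab_group_add) \<Rightarrow> 'a" where
  "zlincomb r m L = (\<Sum>i<r. zsmult (m i) (L i))"

definition znorm1 :: "nat \<Rightarrow> (nat \<Rightarrow> int) \<Rightarrow> real" where
  "znorm1 r m = (\<Sum>i<r. real_of_int \<bar>m i\<bar>)"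

definition open_convex_cone :: "'a::real_normed_vector set \<Rightarrow> bool" where
  "open_convex_cone S \<longleftrightarrow> open S \<and> convex S \<and> (\<forall>x\<in>S. \<forall>c>0. c *\<^sub>R x \<in> S)"

end

theory Submission
  imports Defs
begin

lemma sum_const_add_nat: "(\<Sum>j<(p::nat)+q. (a::'a::ab_group_add)) = (\<Sum>j<p. a) + (\<Sum>j<q. a)"
  by (induction q) (auto simp: add.assoc add.commute add.left_commute)

lemma zsmult_diff_nat: "zsmult (int p - int q) (a::'a::ab_group_add) = (\<Sum>j<p. a) - (\<Sum>j<q. a)"
proof (cases "q \<le> p")
  case True
  have n: "nat (int p - int q) = p - q" by simp
  have s: "(\<Sum>j<p. a) = (\<Sum>j<p-q. a) + (\<Sum>j<q. a)"
    using sum_const_add_nat[where p="p-q" and q=q and a=a] True by simp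
  have "zsmult (int p - int q) a = (\<Sum>j<p-q. a)" using True unfolding zsmult_def n by simp
  then show ?thesis using s by simp
next
  case False
  have n: "nat (- (int p - int q)) = q - p" by simp
  have s: "(\<Sum>j<q. a) = (\<Sum>j<q-p. a) + (\<Sum>j<p. a)"
    using sum_const_add_nat[where p="q-p" and q=p and a=a] False by simp
  have "zsmult (int p - int q) a = - (\<Sum>j<q-p. a)" using False unfolding zsmult_def n by simp
  then show ?thesis using s by simp
qed

lemma int_split: "(k::int) = int (nat k) - int (nat (-k))" by simp

lemma zsmult_add: "zsmult (j+k) (a::'a::ab_group_add) = zsmult j a + zsmult k a"
proof -
  have e: "j + k = int (nat j + nat k) - int (nat (-j) + nat (-k))" by simp
  have "zsmult (j+k) a = (\<Sum>i<nat j + nat k. a) - (\<Sum>i<nat (-j) + nat (-k). a)"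
    by (subst e, rule zsmult_diff_nat)
  also have "\<dots> = ((\<Sum>i<nat j. a) - (\<Sum>i<nat (-j). a)) + ((\<Sum>i<nat k. a) - (\<Sum>i<nat (-k). a))"
    by (simp add: sum_const_add_nat)
  also have "\<dots> = zsmult j a + zsmult k a"
    using zsmult_diff_nat[of "nat j" "nat (-j)" a, unfolded int_split[symmetric]]
      zsmult_diff_nat[of "nat k" "nat (-k)" a, unfolded int_split[symmetric]]
    by simp
  finally show ?thesis .
qed

lemma zsmult_0[simp]: "zsmult 0 a = 0" by (simp add: zsmult_def)
lemma zsmult_1[simp]: "zsmult 1 a = a" by (simp add: zsmult_def)
lemma zsmult_m1[simp]: "zsmult (-1) a = - a" by (simp add: zsmult_def)
lemma zsmult_zero[simp]: "zsmult k (0::'a::ab_group_add) = 0" by (simp add: zsmult_def)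

lemma zsmult_plus: "zsmult k (a + b) = zsmult k a + zsmult k (b::'a::ab_group_add)"
  by (simp add: zsmult_def sum.distrib)

lemma zsmult_sum: "finite A \<Longrightarrow> zsmult k (\<Sum>i\<in>A. f i) = (\<Sum>i\<in>A. zsmult k (f i::'a::ab_group_add))"
  by (induction A rule: finite_induct) (auto simp: zsmult_plus)

lemma zsmult_nat: "zsmult (int m) y = (\<Sum>j<m. y)" by (simp add: zsmult_def)

lemma zsmult_nat_mult: "zsmult (int m) (zsmult k a) = zsmult (int m * k) (a::'a::ab_group_add)"
proof (induction m)
  case 0 then show ?case by simp
next
  case (Suc m)
  have "zsmult (int (Suc m)) (zsmult k a) = (\<Sum>j<Suc m. zsmult k a)" by (rule zsmult_nat)
  also have "\<dots> = (\<Sum>j<m. zsmult k a) + zsmult k a" by simp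
  also have "(\<Sum>j<m. zsmult k a) = zsmult (int m) (zsmult k a)" by (rule zsmult_nat[symmetric])
  also have "\<dots> + zsmult k a = zsmult (int m * k + k) a" using Suc by (simp add: zsmult_add)
  also have "int m * k + k = int (Suc m) * k" by (simp add: distrib_right)
  finally show ?case .
qed


definition Nn :: "('n::finite \<Rightarrow> int) \<Rightarrow> real" where
  "Nn a = (\<Sum>i\<in>UNIV. real_of_int \<bar>a i\<bar>)"

definition GG :: "('n::finite \<Rightarrow> 'p::ab_group_add) \<Rightarrow> ('n \<Rightarrow> int) \<Rightarrow> 'p" where
  "GG L a = (\<Sum>i\<in>UNIV. zsmult (a i) (L i))"

lemma GG_add: "GG L (\<lambda>i. a i + b i) = GG L a + GG L b"
  by (simp add: GG_def zsmult_add sum.distrib)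

lemma GG_zero: "GG L (\<lambda>i. 0) = 0"
  by (simp add: GG_def)

lemma GG_delta: "GG L (\<lambda>j. if j = i then c else 0) = zsmult c (L i)"
proof -
  have "GG L (\<lambda>j. if j = i then c else 0) = (\<Sum>j\<in>UNIV. if j = i then zsmult c (L i) else 0)"
    unfolding GG_def by (rule sum.cong) auto
  also have "\<dots> = zsmult c (L i)" by simp
  finally show ?thesis .
qed

lemma GG_upd_plus: "GG L (a(i := a i + 1)) = L i + GG L a"
proof -
  have "a(i := a i + 1) = (\<lambda>j. a j + (if j = i then 1 else 0))" by auto
  then show ?thesis using GG_add[of L a "\<lambda>j. if j = i then 1 else 0"] GG_delta[of L i 1]
    by (simp add: add.commute)
qed

lemma GG_upd_minus: "GG L (a(i := a i - 1)) = - L i + GG L a"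
proof -
  have "a(i := a i - 1) = (\<lambda>j. a j + (if j = i then -1 else 0))" by auto
  then show ?thesis using GG_add[of L a "\<lambda>j. if j = i then -1 else 0"] GG_delta[of L i "-1"]
    by (simp add: add.commute)
qed

lemma GG_mult: "GG L (\<lambda>i. int m * k i) = zsmult (int m) (\<Sum>i\<in>UNIV. zsmult (k i) (L i))"
  by (simp add: GG_def zsmult_sum zsmult_nat_mult)

lemma Nn_nonneg: "Nn a \<ge> 0" by (simp add: Nn_def sum_nonneg)

lemma enum_transfer:
  obtains e :: "nat \<Rightarrow> 'n::finite" where
    "\<And>(L::'n \<Rightarrow> 'p::ab_group_add) a. zlincomb CARD('n) (a \<circ> e) (L \<circ> e) = GG L a"
    "\<And>a. znorm1 CARD('n) (a \<circ> e) = Nn a"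
proof -
  have "\<exists>e::nat \<Rightarrow> 'n. bij_betw e {0..<CARD('n)} (UNIV::'n set)"
    by (rule ex_bij_betw_nat_finite) simp
  then obtain e :: "nat \<Rightarrow> 'n" where e': "bij_betw e {..<CARD('n)} UNIV"
    by (auto simp: atLeast0LessThan)
  show ?thesis
  proof
    fix L :: "'n \<Rightarrow> 'p" and a
    show "zlincomb CARD('n) (a \<circ> e) (L \<circ> e) = GG L a"
      unfolding zlincomb_def GG_def using sum.reindex_bij_betw[OF e', of "\<lambda>i. zsmult (a i) (L i)"]
      by simp
  next
    fix a :: "'n \<Rightarrow> int"
    show "znorm1 CARD('n) (a \<circ> e) = Nn a"
      unfolding znorm1_def Nn_def using sum.reindex_bij_betw[OF e', of "\<lambda>i. real_of_int \<bar>a i\<bar>"]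
      by simp
  qed
qed


lemma powr_sandwich:
  fixes z A e :: real
  assumes "0 < A" "A / 2 \<le> z" "z \<le> 2 * A"
  shows "z powr e \<le> 2 powr \<bar>e\<bar> * A powr e"
proof (cases "e \<ge> 0")
  case True
  have "z powr e \<le> (2 * A) powr e" using assms True by (intro powr_mono2) auto
  also have "\<dots> = 2 powr \<bar>e\<bar> * A powr e" using True assms by (simp add: powr_mult)
  finally show ?thesis .
next
  case False
  have "z powr e \<le> (A / 2) powr e" using assms False by (intro powr_mono2') auto
  also have "\<dots> = A powr e / 2 powr e" using assms by (simp add: powr_divide)
  also have "\<dots> = 2 powr \<bar>e\<bar> * A powr e" using False by (simp add: powr_minus divide_inverse)
  finally show ?thesis .
qed

definition dd :: "('n::finite \<Rightarrow> int) \<Rightarrow> ('n \<Rightarrow> int) \<Rightarrow> int" where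
  "dd b a = (\<Sum>i\<in>UNIV. \<bar>b i - a i\<bar>)"

lemma Nn_int: "Nn a = real_of_int (\<Sum>i\<in>UNIV. \<bar>a i\<bar>)"
  by (simp add: Nn_def)

lemma dd_nonneg: "dd b a \<ge> 0" by (simp add: dd_def sum_nonneg)

lemma Nn_tri1: "Nn a \<le> Nn c + real_of_int (dd c a)"
proof -
  have "(\<Sum>i\<in>UNIV. \<bar>a i\<bar>) \<le> (\<Sum>i\<in>UNIV. \<bar>c i\<bar> + \<bar>c i - a i\<bar>)"
    by (intro sum_mono) arith
  then have "(\<Sum>i\<in>UNIV. \<bar>a i\<bar>) \<le> (\<Sum>i\<in>UNIV. \<bar>c i\<bar>) + (\<Sum>i\<in>UNIV. \<bar>c i - a i\<bar>)"
    by (simp add: sum.distrib)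
  then show ?thesis unfolding Nn_int dd_def by (simp only: of_int_add[symmetric] of_int_le_iff)
qed

lemma Nn_tri2: "Nn c \<le> Nn a + real_of_int (dd c a)"
proof -
  have "(\<Sum>i\<in>UNIV. \<bar>c i\<bar>) \<le> (\<Sum>i\<in>UNIV. \<bar>a i\<bar> + \<bar>c i - a i\<bar>)"
    by (intro sum_mono) arith
  then have "(\<Sum>i\<in>UNIV. \<bar>c i\<bar>) \<le> (\<Sum>i\<in>UNIV. \<bar>a i\<bar>) + (\<Sum>i\<in>UNIV. \<bar>c i - a i\<bar>)"
    by (simp add: sum.distrib)
  then show ?thesis unfolding Nn_int dd_def by (simp only: of_int_add[symmetric] of_int_le_iff)
qed

lemma sum_split_at:
  fixes F :: "'n::finite \<Rightarrow> 'b::comm_monoid_add"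
  shows "(\<Sum>j\<in>UNIV. F j) = F i + (\<Sum>j\<in>UNIV - {i}. F j)"
  by (simp add: sum.remove)

lemma dd_upd:
  assumes "\<bar>v - a i\<bar> = \<bar>b i - a i\<bar> - 1"
  shows "dd (b(i := v)) a = dd b a - 1"
proof -
  have 1: "dd (b(i := v)) a = \<bar>v - a i\<bar> + (\<Sum>j\<in>UNIV - {i}. \<bar>(b(i := v)) j - a j\<bar>)"
    unfolding dd_def by (subst sum_split_at[of _ i]) simp
  have 2: "(\<Sum>j\<in>UNIV - {i}. \<bar>(b(i := v)) j - a j\<bar>) = (\<Sum>j\<in>UNIV - {i}. \<bar>b j - a j\<bar>)"
    by (rule sum.cong) auto
  have 3: "dd b a = \<bar>b i - a i\<bar> + (\<Sum>j\<in>UNIV - {i}. \<bar>b j - a j\<bar>)"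
    unfolding dd_def by (subst sum_split_at[of _ i]) simp
  show ?thesis unfolding 1 2 3 assms by simp
qed

lemma dd_zero: "dd b a = 0 \<Longrightarrow> b = a"
proof -
  assume "dd b a = 0"
  then have "\<forall>i\<in>UNIV. \<bar>b i - a i\<bar> = 0"
    unfolding dd_def by (subst (asm) sum_nonneg_eq_0_iff) auto
  then show "b = a" by auto
qed

locale A5 =
  fixes h :: "'p::ab_group_add \<Rightarrow> real" and s :: real and L :: "'n::finite \<Rightarrow> 'p"
  assumes s_pos: "s > 0"
    and growthG: "\<exists>C R. \<forall>a. Nn a \<ge> R \<longrightarrow> \<bar>h (GG L a)\<bar> \<le> C * Nn a powr s"
    and diffG: "\<And>L0. \<exists>C R. \<forall>a. Nn a \<ge> R \<longrightarrow> \<bar>h (L0 + GG L a) - h (GG L a)\<bar> \<le> C * Nn a powr (s - 1)"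
begin

lemma step:
  obtains C0 R0 where "C0 \<ge> 0" "R0 > 0"
    "\<And>i a. Nn a \<ge> R0 \<Longrightarrow> \<bar>h (GG L (a(i := a i + 1))) - h (GG L a)\<bar> \<le> C0 * Nn a powr (s-1)"
    "\<And>i a. Nn a \<ge> R0 \<Longrightarrow> \<bar>h (GG L (a(i := a i - 1))) - h (GG L a)\<bar> \<le> C0 * Nn a powr (s-1)"
proof -
  have "\<forall>i. \<exists>C R. \<forall>a. Nn a \<ge> R \<longrightarrow> \<bar>h (L i + GG L a) - h (GG L a)\<bar> \<le> C * Nn a powr (s - 1)"
    using diffG by blast
  then obtain C1 R1 where 1: "\<And>i a. Nn a \<ge> R1 i \<Longrightarrow> \<bar>h (L i + GG L a) - h (GG L a)\<bar> \<le> C1 i * Nn a powr (s - 1)"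
    by metis
  have "\<forall>i. \<exists>C R. \<forall>a. Nn a \<ge> R \<longrightarrow> \<bar>h (- L i + GG L a) - h (GG L a)\<bar> \<le> C * Nn a powr (s - 1)"
    using diffG by blast
  then obtain C2 R2 where 2: "\<And>i a. Nn a \<ge> R2 i \<Longrightarrow> \<bar>h (- L i + GG L a) - h (GG L a)\<bar> \<le> C2 i * Nn a powr (s - 1)"
    by metis
  define C0 where "C0 = (\<Sum>i\<in>UNIV. \<bar>C1 i\<bar> + \<bar>C2 i\<bar>)"
  define R0 where "R0 = 1 + (\<Sum>i\<in>UNIV. \<bar>R1 i\<bar> + \<bar>R2 i\<bar>)"
  have le: "\<bar>f i\<bar> + \<bar>g i\<bar> \<le> (\<Sum>i\<in>UNIV. \<bar>f i\<bar> + \<bar>g i\<bar>)" for f g :: "'n \<Rightarrow> real" and i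
    by (rule member_le_sum) auto
  have C1: "C1 i \<le> C0" and C2: "C2 i \<le> C0" for i
    using le[where f=C1 and g=C2 and i=i] unfolding C0_def by linarith+
  have R1: "R1 i \<le> R0" and R2: "R2 i \<le> R0" for i
    using le[where f=R1 and g=R2 and i=i] unfolding R0_def by linarith+
  have "C0 \<ge> 0" unfolding C0_def by (simp add: sum_nonneg)
  moreover have "R0 > 0" unfolding R0_def
    by (smt (verit) sum_nonneg abs_ge_zero)
  moreover have "\<bar>h (GG L (a(i := a i + 1))) - h (GG L a)\<bar> \<le> C0 * Nn a powr (s-1)" if "Nn a \<ge> R0" for i a
  proof -
    have "\<bar>h (GG L (a(i := a i + 1))) - h (GG L a)\<bar> \<le> C1 i * Nn a powr (s - 1)"
      using 1[of i a] R1[of i] that by (simp add: GG_upd_plus)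
    also have "\<dots> \<le> C0 * Nn a powr (s-1)" using C1[of i] by (intro mult_right_mono) auto
    finally show ?thesis .
  qed
  moreover have "\<bar>h (GG L (a(i := a i - 1))) - h (GG L a)\<bar> \<le> C0 * Nn a powr (s-1)" if "Nn a \<ge> R0" for i a
  proof -
    have "\<bar>h (GG L (a(i := a i - 1))) - h (GG L a)\<bar> \<le> C2 i * Nn a powr (s - 1)"
      using 2[of i a] R2[of i] that by (simp add: GG_upd_minus)
    also have "\<dots> \<le> C0 * Nn a powr (s-1)" using C2[of i] by (intro mult_right_mono) auto
    finally show ?thesis .
  qed
  ultimately show ?thesis using that by blast
qed


lemma path:
  assumes CC: "CC \<ge> 0"
    and st1: "\<And>i a. Nn a \<ge> RR \<Longrightarrow> \<bar>h (GG L (a(i := a i + 1))) - h (GG L a)\<bar> \<le> CC * Nn a powr (s-1)"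
    and st2: "\<And>i a. Nn a \<ge> RR \<Longrightarrow> \<bar>h (GG L (a(i := a i - 1))) - h (GG L a)\<bar> \<le> CC * Nn a powr (s-1)"
    and ball: "\<And>c. real_of_int (dd c a) \<le> D \<Longrightarrow> Nn c \<ge> RR \<and> Nn c powr (s-1) \<le> B"
  shows "nat (dd b a) = k \<Longrightarrow> real_of_int (dd b a) \<le> D \<Longrightarrow>
    \<bar>h (GG L b) - h (GG L a)\<bar> \<le> CC * B * real k"
proof (induction k arbitrary: b)
  case 0
  then have "dd b a = 0" using dd_nonneg[of b a] by simp
  then have "b = a" by (rule dd_zero)
  then show ?case by simp
next
  case (Suc k)
  then have "dd b a \<noteq> 0" by auto
  then have "b \<noteq> a" by (auto simp: dd_def)
  then obtain i where i: "b i \<noteq> a i" by (auto simp: fun_eq_iff)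
  show ?case
  proof (cases "b i > a i")
    case True
    define b' where "b' = b(i := b i - 1)"
    have ddb': "dd b' a = dd b a - 1" unfolding b'_def using True by (intro dd_upd) auto
    then have k: "nat (dd b' a) = k" using Suc.prems(1) by simp
    have D': "real_of_int (dd b' a) \<le> D" using ddb' Suc.prems(2) by simp
    have IH: "\<bar>h (GG L b') - h (GG L a)\<bar> \<le> CC * B * real k" using Suc.IH[OF k D'] .
    have bb: "b = b'(i := b' i + 1)" unfolding b'_def by auto
    have bl: "Nn b' \<ge> RR" "Nn b' powr (s-1) \<le> B" using ball[OF D'] by auto
    have "\<bar>h (GG L b) - h (GG L b')\<bar> \<le> CC * Nn b' powr (s-1)"
      using st1[OF bl(1), of i] bb by simp
    also have "\<dots> \<le> CC * B" using bl(2) CC by (intro mult_left_mono) auto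
    finally have "\<bar>h (GG L b) - h (GG L b')\<bar> \<le> CC * B" .
    with IH show ?thesis by (simp add: algebra_simps)
  next
    case False
    then have F: "b i < a i" using i by simp
    define b' where "b' = b(i := b i + 1)"
    have ddb': "dd b' a = dd b a - 1" unfolding b'_def using F by (intro dd_upd) auto
    then have k: "nat (dd b' a) = k" using Suc.prems(1) by simp
    have D': "real_of_int (dd b' a) \<le> D" using ddb' Suc.prems(2) by simp
    have IH: "\<bar>h (GG L b') - h (GG L a)\<bar> \<le> CC * B * real k" using Suc.IH[OF k D'] .
    have bb: "b = b'(i := b' i - 1)" unfolding b'_def by auto
    have bl: "Nn b' \<ge> RR" "Nn b' powr (s-1) \<le> B" using ball[OF D'] by auto
    have "\<bar>h (GG L b) - h (GG L b')\<bar> \<le> CC * Nn b' powr (s-1)"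
      using st2[OF bl(1), of i] bb by simp
    also have "\<dots> \<le> CC * B" using bl(2) CC by (intro mult_left_mono) auto
    finally have "\<bar>h (GG L b) - h (GG L b')\<bar> \<le> CC * B" .
    with IH show ?thesis by (simp add: algebra_simps)
  qed
qed

lemma lipE:
  obtains C1 R1 where "C1 \<ge> 0" "R1 > 0"
    "\<And>a b. Nn a \<ge> R1 \<Longrightarrow> Nn a \<ge> 2 * real_of_int (dd b a) \<Longrightarrow>
       \<bar>h (GG L b) - h (GG L a)\<bar> \<le> C1 * real_of_int (dd b a) * Nn a powr (s-1)"
proof -
  obtain C0 R0 where C0: "C0 \<ge> 0" and R0: "R0 > 0"
    and st1: "\<And>i a. Nn a \<ge> R0 \<Longrightarrow> \<bar>h (GG L (a(i := a i + 1))) - h (GG L a)\<bar> \<le> C0 * Nn a powr (s-1)"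
    and st2: "\<And>i a. Nn a \<ge> R0 \<Longrightarrow> \<bar>h (GG L (a(i := a i - 1))) - h (GG L a)\<bar> \<le> C0 * Nn a powr (s-1)"
    using step by metis
  define C1 where "C1 = C0 * 2 powr \<bar>s - 1\<bar>"
  have "\<bar>h (GG L b) - h (GG L a)\<bar> \<le> C1 * real_of_int (dd b a) * Nn a powr (s-1)"
    if a1: "Nn a \<ge> 2 * R0" and a2: "Nn a \<ge> 2 * real_of_int (dd b a)" for a b
  proof -
    define D where "D = real_of_int (dd b a)"
    define B where "B = 2 powr \<bar>s - 1\<bar> * Nn a powr (s-1)"
    have ball: "Nn c \<ge> R0 \<and> Nn c powr (s-1) \<le> B" if "real_of_int (dd c a) \<le> D" for c
    proof -
      have "Nn a \<le> Nn c + real_of_int (dd c a)" by (rule Nn_tri1)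
      moreover have "Nn c \<le> Nn a + real_of_int (dd c a)" by (rule Nn_tri2)
      moreover have "0 \<le> real_of_int (dd c a)" using dd_nonneg[of c a] by simp
      ultimately have lo: "Nn a / 2 \<le> Nn c" and hi: "Nn c \<le> 2 * Nn a"
        using that a2 unfolding D_def by linarith+
      have "Nn c \<ge> R0" using lo a1 by linarith
      moreover have "Nn c powr (s-1) \<le> B" unfolding B_def
        using powr_sandwich[of "Nn a" "Nn c" "s-1"] lo hi a1 R0 by linarith
      ultimately show ?thesis by blast
    qed
    have "\<bar>h (GG L b) - h (GG L a)\<bar> \<le> C0 * B * real (nat (dd b a))"
      by (rule path[where a=a and D=D and B=B and RR=R0 and CC=C0, OF C0 st1 st2 ball])
        (simp_all add: D_def)
    also have "real (nat (dd b a)) = real_of_int (dd b a)" using dd_nonneg[of b a] by simp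
    finally show ?thesis unfolding B_def C1_def by (simp add: algebra_simps)
  qed
  moreover have "C1 \<ge> 0" unfolding C1_def using C0 by simp
  moreover have "2 * R0 > 0" using R0 by simp
  ultimately show ?thesis using that by blast
qed

end

definition LSP :: "(nat \<Rightarrow> real) \<Rightarrow> real \<Rightarrow> bool" where
  "LSP u H \<longleftrightarrow> (\<forall>e>0. \<exists>M. \<forall>m\<ge>M. u m < H + e) \<and> (\<forall>e>0. \<forall>M. \<exists>m\<ge>M. u m > H - e)"

lemma LSP_D1: "LSP u H \<Longrightarrow> e > 0 \<Longrightarrow> \<exists>M. \<forall>m\<ge>M. u m < H + e"
  unfolding LSP_def by blast
lemma LSP_D2: "LSP u H \<Longrightarrow> e > 0 \<Longrightarrow> \<exists>m\<ge>M. u m > H - e"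
  unfolding LSP_def by blast

lemma LSP_approx:
  assumes "\<And>e. e > 0 \<Longrightarrow> \<exists>v H'. \<bar>H' - H\<bar> \<le> e \<and> LSP v H' \<and> (\<exists>M. \<forall>m\<ge>M. \<bar>u m - v m\<bar> \<le> e)"
  shows "LSP u H"
  unfolding LSP_def
proof safe
  fix e :: real assume e: "e > 0"
  obtain v H' M where v: "\<bar>H' - H\<bar> \<le> e/3" "LSP v H'" "\<forall>m\<ge>M. \<bar>u m - v m\<bar> \<le> e/3"
    using assms[of "e/3"] e by auto
  obtain M2 where M2: "\<forall>m\<ge>M2. v m < H' + e/3" using LSP_D1[OF v(2), of "e/3"] e by auto
  show "\<exists>M. \<forall>m\<ge>M. u m < H + e"
  proof (intro exI allI impI)
    fix m assume "max M M2 \<le> m"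
    then have "\<bar>u m - v m\<bar> \<le> e/3" "v m < H' + e/3" using v(3) M2 by auto
    then show "u m < H + e" using v(1) by (simp only: abs_le_iff abs_less_iff) linarith
  qed
next
  fix e :: real and M0 :: nat assume e: "e > 0"
  obtain v H' M where v: "\<bar>H' - H\<bar> \<le> e/3" "LSP v H'" "\<forall>m\<ge>M. \<bar>u m - v m\<bar> \<le> e/3"
    using assms[of "e/3"] e by auto
  obtain m where m: "m \<ge> max M M0" "v m > H' - e/3" using LSP_D2[OF v(2), of "e/3" "max M M0"] e by auto
  have "\<bar>u m - v m\<bar> \<le> e/3" using v(3) m(1) by auto
  then have "H - e < u m" using v(1) m(2) by (simp only: abs_le_iff abs_less_iff) linarith
  then show "\<exists>m\<ge>M0. H - e < u m" using m(1) by auto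
qed

lemma lim_approx:
  fixes u :: "nat \<Rightarrow> real"
  assumes "\<And>e. e > 0 \<Longrightarrow> \<exists>v H'. \<bar>H' - H\<bar> \<le> e \<and> v \<longlonglongrightarrow> H' \<and> (\<exists>M. \<forall>m\<ge>M. \<bar>u m - v m\<bar> \<le> e)"
  shows "u \<longlonglongrightarrow> H"
proof (rule LIMSEQ_I)
  fix e :: real assume e: "e > 0"
  obtain v H' M where v: "\<bar>H' - H\<bar> \<le> e/3" "v \<longlonglongrightarrow> H'" "\<forall>m\<ge>M. \<bar>u m - v m\<bar> \<le> e/3"
    using assms[of "e/3"] e by auto
  obtain M2 where M2: "\<forall>m\<ge>M2. norm (v m - H') < e/3" using LIMSEQ_D[OF v(2), of "e/3"] e
    by auto
  show "\<exists>M. \<forall>m\<ge>M. norm (u m - H) < e"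
  proof (intro exI allI impI)
    fix m assume "max M M2 \<le> m"
    then have "\<bar>u m - v m\<bar> \<le> e/3" "\<bar>v m - H'\<bar> < e/3" using v(3) M2 by auto
    then show "norm (u m - H) < e" using v(1) by (simp only: abs_le_iff abs_less_iff real_norm_def) linarith
  qed
qed

lemma LSP_tendsto: "(u :: nat \<Rightarrow> real) \<longlonglongrightarrow> H \<Longrightarrow> LSP u H"
  unfolding LSP_def LIMSEQ_iff
proof safe
  fix e :: real assume "\<forall>r>0. \<exists>no. \<forall>n\<ge>no. norm (u n - H) < r" "e > 0"
  then obtain M where M: "\<forall>n\<ge>M. norm (u n - H) < e" by blast
  show "\<exists>M. \<forall>m\<ge>M. u m < H + e" using M by (intro exI[of _ M]) auto
next
  fix e :: real and M0 assume "\<forall>r>0. \<exists>no. \<forall>n\<ge>no. norm (u n - H) < r" "e > 0"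
  then obtain M where M: "\<forall>n\<ge>M. norm (u n - H) < e" by blast
  show "\<exists>m\<ge>M0. H - e < u m" using M[rule_format, of "max M M0"] by (intro exI[of _ "max M M0"]) auto
qed

lemma LSP_div:
  assumes "c > 0" "LSP u H" shows "LSP (\<lambda>m. u m / c) (H / c)"
  unfolding LSP_def
proof safe
  fix e :: real assume e: "e > 0"
  then obtain M where M: "\<forall>m\<ge>M. u m < H + e * c" using LSP_D1[OF assms(2), of "e*c"] assms(1) by auto
  show "\<exists>M. \<forall>m\<ge>M. u m / c < H / c + e"
    using M assms(1) by (intro exI[of _ M]) (auto simp: field_simps)
next
  fix e :: real and M0 assume e: "e > 0"
  then obtain m where m: "m \<ge> M0" "u m > H - e * c" using LSP_D2[OF assms(2), of "e*c" M0] assms(1) by auto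
  have "H / c - e = (H - e * c) / c" using assms(1) by (simp add: field_simps)
  also have "\<dots> < u m / c" using m(2) assms(1) by (rule divide_strict_right_mono)
  finally show "\<exists>m\<ge>M0. H / c - e < u m / c"
    using m(1) by blast
qed

lemma div_ge_nat: "(q::nat) > 0 \<Longrightarrow> M * q \<le> m \<Longrightarrow> M \<le> m div q"
  by (metis div_le_mono nonzero_mult_div_cancel_right not_gr0)

lemma LSP_reindex:
  assumes "q > 0" "LSP u H" shows "LSP (\<lambda>m. u (m div (q::nat))) H"
  unfolding LSP_def
proof safe
  fix e :: real assume e: "e > 0"
  then obtain M where M: "\<forall>m\<ge>M. u m < H + e" using LSP_D1[OF assms(2), of e] by auto
  show "\<exists>M. \<forall>m\<ge>M. u (m div q) < H + e"
  proof (intro exI allI impI)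
    fix m assume "M * q \<le> m"
    then have "M \<le> m div q" by (rule div_ge_nat[OF assms(1)])
    then show "u (m div q) < H + e" using M by blast
  qed
next
  fix e :: real and M0 assume e: "e > 0"
  then obtain j where j: "j \<ge> M0" "u j > H - e" using LSP_D2[OF assms(2), of e M0] by auto
  have "j \<le> j * q" using assms(1) by simp
  then have "j * q \<ge> M0" using j(1) by linarith
  moreover have "(j * q) div q = j" using assms(1) by simp
  ultimately show "\<exists>m\<ge>M0. H - e < u (m div q)" using j by (intro exI[of _ "j*q"]) auto
qed

lemma lim_reindex:
  fixes u :: "nat \<Rightarrow> real"
  assumes "q > 0" "u \<longlonglongrightarrow> H" shows "(\<lambda>m. u (m div (q::nat))) \<longlonglongrightarrow> H"
proof (rule LIMSEQ_I)
  fix e :: real assume e: "e > 0"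
  then obtain M where M: "\<forall>m\<ge>M. norm (u m - H) < e" using LIMSEQ_D[OF assms(2), of e] by auto
  show "\<exists>M. \<forall>m\<ge>M. norm (u (m div q) - H) < e"
  proof (intro exI allI impI)
    fix m assume "M * q \<le> m"
    then have "M \<le> m div q" by (rule div_ge_nat[OF assms(1)])
    then show "norm (u (m div q) - H) < e" using M by blast
  qed
qed

lemma LSP_limsup: "LSP u H \<longleftrightarrow> limsup (\<lambda>m. ereal (u m)) = ereal H"
proof
  assume A: "LSP u H"
  have "limsup (\<lambda>m. ereal (u m)) \<le> ereal H"
    unfolding Limsup_le_iff
  proof safe
    fix y assume y: "y > ereal H"
    show "\<forall>\<^sub>F x in sequentially. ereal (u x) < y"
    proof (cases y)
      case (real r)
      then obtain M where "\<forall>m\<ge>M. u m < H + (r - H)" using LSP_D1[OF A, of "r - H"] y by auto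
      then show ?thesis using real unfolding eventually_sequentially by auto
    next
      case PInf then show ?thesis by simp
    next
      case MInf then show ?thesis using y by simp
    qed
  qed
  moreover have "ereal H \<le> limsup (\<lambda>m. ereal (u m))"
  proof (rule Limsup_greatest)
    fix P assume "eventually P sequentially"
    then obtain N where N: "\<forall>n\<ge>N. P n" unfolding eventually_sequentially by auto
    show "ereal H \<le> (SUP x\<in>Collect P. ereal (u x))"
    proof (rule dense_le)
      fix y assume y: "y < ereal H"
      show "y \<le> (SUP x\<in>Collect P. ereal (u x))"
      proof (cases y)
        case (real r)
        then obtain m where "m \<ge> N" "u m > H - (H - r)" using LSP_D2[OF A, of "H - r" N] y by auto
        then have "y \<le> ereal (u m)" "m \<in> Collect P" using real N by auto
        moreover have "ereal (u m) \<le> (SUP x\<in>Collect P. ereal (u x))"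
          by (rule SUP_upper) fact
        ultimately show ?thesis by (metis order_trans)
      next
        case PInf then show ?thesis using y by simp
      next
        case MInf then show ?thesis by simp
      qed
    qed
  qed
  ultimately show "limsup (\<lambda>m. ereal (u m)) = ereal H" by simp
next
  assume A: "limsup (\<lambda>m. ereal (u m)) = ereal H"
  show "LSP u H" unfolding LSP_def
  proof safe
    fix e :: real assume e: "e > 0"
    have "limsup (\<lambda>m. ereal (u m)) \<le> ereal H" using A by simp
    moreover have "ereal H < ereal (H + e)" using e by simp
    ultimately have "limsup (\<lambda>m. ereal (u m)) < ereal (H + e)" by (rule le_less_trans)
    then have "\<forall>\<^sub>F x in sequentially. ereal (u x) < ereal (H + e)"
      by (rule Limsup_lessD)
    then show "\<exists>M. \<forall>m\<ge>M. u m < H + e" unfolding eventually_sequentially by auto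
  next
    fix e :: real and M assume e: "e > 0"
    show "\<exists>m\<ge>M. H - e < u m"
    proof (rule ccontr)
      assume "\<not> (\<exists>m\<ge>M. H - e < u m)"
      then have "\<forall>m\<ge>M. ereal (u m) \<le> ereal (H - e)" by auto
      then have "eventually (\<lambda>m. ereal (u m) \<le> ereal (H - e)) sequentially"
        unfolding eventually_sequentially by blast
      then have "limsup (\<lambda>m. ereal (u m)) \<le> ereal (H - e)"
        by (intro Limsup_bounded) auto
      then show False using A e by simp
    qed
  qed
qed

definition Nx :: "real ^ 'n::finite \<Rightarrow> real" where
  "Nx x = (\<Sum>i\<in>UNIV. \<bar>x $ i\<bar>)"

definition dx :: "real ^ 'n::finite \<Rightarrow> real ^ 'n \<Rightarrow> real" where
  "dx x y = (\<Sum>i\<in>UNIV. \<bar>x $ i - y $ i\<bar>)"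

lemma floor_abs_le: "real_of_int \<bar>\<lfloor>t::real\<rfloor> - \<lfloor>u::real\<rfloor>\<bar> \<le> \<bar>t - u\<bar> + 1"
proof -
  have "real_of_int \<lfloor>t\<rfloor> \<le> t" "t < real_of_int \<lfloor>t\<rfloor> + 1" "real_of_int \<lfloor>u\<rfloor> \<le> u" "u < real_of_int \<lfloor>u\<rfloor> + 1"
    by linarith+
  moreover have "t - u \<le> \<bar>t - u\<bar>" "u - t \<le> \<bar>t - u\<bar>" by auto
  ultimately show ?thesis by (simp add: abs_le_iff) linarith
qed

lemma floor_abs_bounds: "\<bar>t::real\<bar> - 1 \<le> real_of_int \<bar>\<lfloor>t\<rfloor>\<bar>" "real_of_int \<bar>\<lfloor>t\<rfloor>\<bar> \<le> \<bar>t\<bar> + 1"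
proof -
  have "real_of_int \<lfloor>t\<rfloor> \<le> t" "t < real_of_int \<lfloor>t\<rfloor> + 1"
    by linarith+
  then show "\<bar>t::real\<bar> - 1 \<le> real_of_int \<bar>\<lfloor>t\<rfloor>\<bar>" "real_of_int \<bar>\<lfloor>t\<rfloor>\<bar> \<le> \<bar>t\<bar> + 1"
    by (simp only: of_int_abs; arith)+
qed

lemma Nn_floor:
  fixes x :: "real ^ 'n::finite"
  shows "Nn (\<lambda>i. \<lfloor>real m * x $ i\<rfloor>) \<ge> real m * Nx x - real CARD('n)"
    and "Nn (\<lambda>i. \<lfloor>real m * x $ i\<rfloor>) \<le> real m * Nx x + real CARD('n)"
proof -
  have am: "\<bar>real m * x $ i\<bar> = real m * \<bar>x $ i\<bar>" for i by (simp add: abs_mult)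
  have lo: "real_of_int \<bar>\<lfloor>real m * x $ i\<rfloor>\<bar> \<ge> real m * \<bar>x $ i\<bar> - 1" for i
    using floor_abs_bounds(1)[of "real m * x $ i"] am[of i] by simp
  have hi: "real_of_int \<bar>\<lfloor>real m * x $ i\<rfloor>\<bar> \<le> real m * \<bar>x $ i\<bar> + 1" for i
    using floor_abs_bounds(2)[of "real m * x $ i"] am[of i] by simp
  have "(\<Sum>i\<in>UNIV. real m * \<bar>x $ i\<bar> - 1) \<le> Nn (\<lambda>i. \<lfloor>real m * x $ i\<rfloor>)"
    unfolding Nn_def by (intro sum_mono lo)
  then show "Nn (\<lambda>i. \<lfloor>real m * x $ i\<rfloor>) \<ge> real m * Nx x - real CARD('n)"
    by (simp add: sum_subtractf sum_distrib_left Nx_def)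
  have "Nn (\<lambda>i. \<lfloor>real m * x $ i\<rfloor>) \<le> (\<Sum>i\<in>UNIV. real m * \<bar>x $ i\<bar> + 1)"
    unfolding Nn_def by (intro sum_mono hi)
  then show "Nn (\<lambda>i. \<lfloor>real m * x $ i\<rfloor>) \<le> real m * Nx x + real CARD('n)"
    by (simp add: sum.distrib sum_distrib_left Nx_def)
qed

lemma dd_floor:
  fixes x y :: "real ^ 'n::finite"
  shows "real_of_int (dd (\<lambda>i. \<lfloor>real m * y $ i\<rfloor>) (\<lambda>i. \<lfloor>real m * x $ i\<rfloor>)) \<le> real m * dx x y + real CARD('n)"
proof -
  have "real_of_int \<bar>\<lfloor>real m * y $ i\<rfloor> - \<lfloor>real m * x $ i\<rfloor>\<bar> \<le> real m * \<bar>x $ i - y $ i\<bar> + 1" for i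
  proof -
    have "\<bar>\<lfloor>real m * y $ i\<rfloor> - \<lfloor>real m * x $ i\<rfloor>\<bar> \<le> \<bar>real m * y $ i - real m * x $ i\<bar> + 1"
      by (rule floor_abs_le)
    also have "\<bar>real m * y $ i - real m * x $ i\<bar> = real m * \<bar>x $ i - y $ i\<bar>"
      by (simp add: abs_mult right_diff_distrib[symmetric] abs_minus_commute)
    finally show ?thesis .
  qed
  then have "(\<Sum>i\<in>UNIV. real_of_int \<bar>\<lfloor>real m * y $ i\<rfloor> - \<lfloor>real m * x $ i\<rfloor>\<bar>) \<le> (\<Sum>i\<in>UNIV. real m * \<bar>x $ i - y $ i\<bar> + 1)"
    by (intro sum_mono)
  then show ?thesis by (simp add: dd_def sum.distrib sum_distrib_left dx_def)
qed

context A5 begin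

lemma contC:
  fixes x :: "real ^ 'n"
  assumes X: "Nx x > 0"
  obtains K where "K \<ge> 0" "\<And>y. dx x y \<le> Nx x / 4 \<Longrightarrow> \<exists>M. \<forall>m\<ge>M.
     \<bar>h (GG L (\<lambda>i. \<lfloor>real m * x $ i\<rfloor>)) / real m powr s - h (GG L (\<lambda>i. \<lfloor>real m * y $ i\<rfloor>)) / real m powr s\<bar>
       \<le> K * dx x y + K / real m"
proof -
  obtain C1 R1 where C1: "C1 \<ge> 0" and R1: "R1 > 0"
    and lip: "\<And>a b. Nn a \<ge> R1 \<Longrightarrow> Nn a \<ge> 2 * real_of_int (dd b a) \<Longrightarrow>
       \<bar>h (GG L b) - h (GG L a)\<bar> \<le> C1 * real_of_int (dd b a) * Nn a powr (s-1)"
    using lipE by metis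
  define n where "n = real CARD('n)"
  define X where "X = Nx x"
  define K' where "K' = C1 * 2 powr \<bar>s - 1\<bar> * X powr (s - 1)"
  define K where "K = K' * (1 + n)"
  have n0: "n \<ge> 0" unfolding n_def by simp
  have K'0: "K' \<ge> 0" unfolding K'_def using C1 by simp
  have K0: "K \<ge> 0" unfolding K_def using K'0 n0 by simp
  have main: "\<exists>M. \<forall>m\<ge>M.
     \<bar>h (GG L (\<lambda>i. \<lfloor>real m * x $ i\<rfloor>)) / real m powr s - h (GG L (\<lambda>i. \<lfloor>real m * y $ i\<rfloor>)) / real m powr s\<bar>
       \<le> K * dx x y + K / real m" if dy: "dx x y \<le> Nx x / 4" for y
  proof (intro exI allI impI)
    fix m :: nat
    assume mM: "nat \<lceil>(R1 + 6 * n + 1) / X\<rceil> + 1 \<le> m"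
    define a where "a = (\<lambda>i. \<lfloor>real m * x $ i\<rfloor>)"
    define b where "b = (\<lambda>i. \<lfloor>real m * y $ i\<rfloor>)"
    define d where "d = dx x y"
    have X0: "X > 0" using assms unfolding X_def .
    have m1: "real m \<ge> 1" using mM by linarith
    have "real m \<ge> (R1 + 6 * n + 1) / X" using mM by linarith
    then have mX: "real m * X \<ge> R1 + 6 * n + 1" using X0 by (simp add: field_simps)
    have d0: "d \<ge> 0" unfolding d_def dx_def by (simp add: sum_nonneg)
    have dX: "d \<le> X / 4" using dy unfolding d_def X_def .
    have Na_lo: "Nn a \<ge> real m * X - n" and Na_hi: "Nn a \<le> real m * X + n"
      using Nn_floor[of m x] unfolding a_def X_def n_def by auto
    have dd_hi: "real_of_int (dd b a) \<le> real m * d + n"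
      using dd_floor[of m y x] unfolding a_def b_def d_def n_def by simp
    have "real m * d \<le> real m * X / 4" using dX m1 by (simp add: mult_left_mono)
    then have "2 * real_of_int (dd b a) \<le> real m * X / 2 + 2 * n" using dd_hi by linarith
    then have c1: "Nn a \<ge> R1" "Nn a \<ge> 2 * real_of_int (dd b a)"
      using Na_lo mX n0 R1 by linarith+
    have c2: "real m * X / 2 \<le> Nn a" "Nn a \<le> 2 * (real m * X)"
      using Na_lo Na_hi mX n0 R1 by linarith+
    have mX0: "real m * X > 0" using m1 X0 by simp
    have "\<bar>h (GG L b) - h (GG L a)\<bar> \<le> C1 * real_of_int (dd b a) * Nn a powr (s-1)"
      using lip c1 by blast
    also have "\<dots> \<le> C1 * (real m * d + n) * (2 powr \<bar>s - 1\<bar> * (real m * X) powr (s - 1))"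
    proof (rule mult_mono)
      show "C1 * real_of_int (dd b a) \<le> C1 * (real m * d + n)" using dd_hi C1 by (rule mult_left_mono)
      show "Nn a powr (s - 1) \<le> 2 powr \<bar>s - 1\<bar> * (real m * X) powr (s - 1)"
        using powr_sandwich[OF mX0 c2] by simp
    qed (use C1 d0 n0 in auto)
    also have "\<dots> = K' * (real m * d + n) * real m powr (s - 1)"
      unfolding K'_def using m1 X0 by (simp add: powr_mult)
    finally have A: "\<bar>h (GG L b) - h (GG L a)\<bar> \<le> K' * (real m * d + n) * real m powr (s - 1)" .
    have P0: "real m powr s > 0" using m1 by simp
    have "\<bar>h (GG L a) / real m powr s - h (GG L b) / real m powr s\<bar> = \<bar>h (GG L b) - h (GG L a)\<bar> / real m powr s"
      using P0 by (simp add: diff_divide_distrib[symmetric] abs_minus_commute)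
    also have "\<dots> \<le> K' * (real m * d + n) * real m powr (s - 1) / real m powr s"
      using A P0 by (simp add: divide_right_mono)
    also have "real m powr (s - 1) / real m powr s = 1 / real m"
      using m1 by (simp add: powr_diff)
    then have "K' * (real m * d + n) * real m powr (s - 1) / real m powr s = K' * (real m * d + n) / real m"
      by (metis times_divide_eq_right mult.right_neutral)
    also have "\<dots> = K' * d + K' * n / real m" using m1 by (simp add: field_simps)
    also have "\<dots> \<le> K * d + K / real m"
    proof -
      have "K' \<le> K" unfolding K_def using K'0 n0 by (simp add: algebra_simps)
      then have "K' * d \<le> K * d" using d0 by (rule mult_right_mono)
      moreover have "K' * n \<le> K" unfolding K_def using K'0 n0 by (simp add: algebra_simps)
      then have "K' * n / real m \<le> K / real m" using m1 by (simp add: divide_right_mono)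
      ultimately show ?thesis by linarith
    qed
    finally show "\<bar>h (GG L (\<lambda>i. \<lfloor>real m * x $ i\<rfloor>)) / real m powr s - h (GG L (\<lambda>i. \<lfloor>real m * y $ i\<rfloor>)) / real m powr s\<bar>
       \<le> K * dx x y + K / real m" unfolding a_def b_def d_def .
  qed
  show ?thesis using that K0 main by blast
qed

end

lemma lim_const_powr: "s > 0 \<Longrightarrow> (\<lambda>m::nat. c / real m powr s) \<longlonglongrightarrow> 0"
proof -
  assume s: "s > 0"
  have "(\<lambda>m::nat. real m powr (-s)) \<longlonglongrightarrow> 0"
    using s by (intro tendsto_neg_powr filterlim_real_sequentially) auto
  then have "(\<lambda>m::nat. c * real m powr (-s)) \<longlonglongrightarrow> 0" by (rule tendsto_mult_right_zero)
  moreover have "c * real m powr (-s) = c / real m powr s" for m :: nat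
    by (simp add: powr_minus divide_inverse)
  ultimately show ?thesis by simp
qed

lemma div_real_bounds:
  assumes "(q::nat) > 0"
  shows "real (m div q) * real q \<le> real m" "real m < real (m div q) * real q + real q"
proof -
  have e: "m = m div q * q + m mod q" by simp
  have "m mod q < q" using assms by simp
  then have "real m = real (m div q) * real q + real (m mod q)" "real (m mod q) < real q"
    by (metis e of_nat_add of_nat_mult, simp)
  then show "real (m div q) * real q \<le> real m" "real m < real (m div q) * real q + real q" by auto
qed

lemma ratio_lim:
  assumes "(q::nat) > 0"
  shows "(\<lambda>m. real (m div q) * real q / real m) \<longlonglongrightarrow> 1"
proof -
  have "(\<lambda>m. real (m div q) * real q / real m - 1) \<longlonglongrightarrow> 0"
  proof (rule Lim_null_comparison)
    show "\<forall>\<^sub>F m in sequentially. norm (real (m div q) * real q / real m - 1) \<le> real q / real m"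
    proof (rule eventually_sequentiallyI[of 1])
      fix m :: nat assume m: "1 \<le> m"
      then have m0: "real m > 0" by simp
      have "real (m div q) * real q / real m - 1 = (real (m div q) * real q - real m) / real m"
        using m0 by (simp add: field_simps)
      moreover have "\<bar>real (m div q) * real q - real m\<bar> \<le> real q"
        using div_real_bounds[OF assms, of m] by linarith
      ultimately show "norm (real (m div q) * real q / real m - 1) \<le> real q / real m"
        using m0 by (simp add: abs_div divide_right_mono)
    qed
    show "(\<lambda>m. real q / real m) \<longlonglongrightarrow> 0" by (rule lim_const_over_n)
  qed
  then show ?thesis by (simp add: LIM_zero_iff)
qed

lemma Nn_scale: "Nn (\<lambda>i. int j * k i) = real j * Nn k"
  by (simp add: Nn_def abs_mult sum_distrib_left)

lemma floor_rat_bound: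
  assumes q: "(q::nat) > 0"
  shows "\<bar>\<lfloor>real m * real_of_int c / real q\<rfloor> - int (m div q) * c\<bar> \<le> \<bar>c\<bar>"
proof -
  define j where "j = m div q"
  define t where "t = (real m / real q - real j) * real_of_int c"
  have b: "real j * real q \<le> real m" "real m < real j * real q + real q"
    using div_real_bounds[OF q, of m] unfolding j_def by auto
  have qq: "real q > 0" using q by simp
  have f0: "0 \<le> real m / real q - real j" using b qq by (simp add: field_simps)
  have f1: "real m / real q - real j < 1" using b qq by (simp add: field_simps)
  have tb: "\<bar>t\<bar> \<le> real_of_int \<bar>c\<bar>"
  proof -
    have "\<bar>t\<bar> = (real m / real q - real j) * \<bar>real_of_int c\<bar>" unfolding t_def using f0 by (simp add: abs_mult)
    also have "\<dots> \<le> 1 * \<bar>real_of_int c\<bar>" using f1 by (intro mult_right_mono) auto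
    finally show ?thesis by simp
  qed
  have e: "real m * real_of_int c / real q = t + real_of_int (int j * c)"
    unfolding t_def using qq by (simp add: field_simps)
  have "\<lfloor>real m * real_of_int c / real q\<rfloor> = \<lfloor>t\<rfloor> + int j * c"
    unfolding e by (rule floor_add_int[symmetric])
  then have "\<lfloor>real m * real_of_int c / real q\<rfloor> - int j * c = \<lfloor>t\<rfloor>"
    by simp
  moreover have tt: "t \<le> \<bar>t\<bar>" "- \<bar>t\<bar> \<le> t" by auto
  moreover have "\<lfloor>t\<rfloor> \<le> \<bar>c\<bar>" unfolding floor_le_iff using tb tt by linarith
  moreover have "- \<bar>c\<bar> \<le> \<lfloor>t\<rfloor>" unfolding le_floor_iff of_int_minus using tb tt by linarith
  ultimately show ?thesis unfolding j_def by simp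
qed

context A5 begin

lemma ratR:
  fixes k :: "'n \<Rightarrow> int" and q :: nat
  assumes q: "q > 0"
  shows "(\<lambda>m. h (GG L (\<lambda>i. \<lfloor>real m * real_of_int (k i) / real q\<rfloor>)) / real m powr s
        - (h (GG L (\<lambda>i. int (m div q) * k i)) / real (m div q) powr s) / real q powr s) \<longlonglongrightarrow> 0"
proof (cases "\<forall>i. k i = 0")
  case True
  then have 1: "(\<lambda>i. \<lfloor>real m * real_of_int (k i) / real q\<rfloor>) = (\<lambda>i. 0)"
    "(\<lambda>i. int (m div q) * k i) = (\<lambda>i. 0)" for m by auto
  have a: "(\<lambda>m. h 0 / real m powr s) \<longlonglongrightarrow> 0" using s_pos by (rule lim_const_powr)
  have b: "(\<lambda>m. (h 0 / real (m div q) powr s) / real q powr s) \<longlonglongrightarrow> 0"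
    using lim_reindex[OF q a] by (rule tendsto_divide_zero)
  show ?thesis unfolding 1 GG_zero using tendsto_diff[OF a b] by simp
next
  case False
  then obtain i0 where i0: "k i0 \<noteq> 0" by auto
  define Nk where "Nk = Nn k"
  have "real_of_int \<bar>k i0\<bar> \<le> Nk" unfolding Nk_def Nn_def
    by (rule member_le_sum) auto
  then have Nk1: "Nk \<ge> 1" using i0 by linarith
  obtain C R where gr: "\<And>a. Nn a \<ge> R \<Longrightarrow> \<bar>h (GG L a)\<bar> \<le> C * Nn a powr s"
    using growthG by blast
  obtain C1 R1 where C1: "C1 \<ge> 0" and R1: "R1 > 0"
    and lip: "\<And>a b. Nn a \<ge> R1 \<Longrightarrow> Nn a \<ge> 2 * real_of_int (dd b a) \<Longrightarrow>
       \<bar>h (GG L b) - h (GG L a)\<bar> \<le> C1 * real_of_int (dd b a) * Nn a powr (s-1)"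
    using lipE by metis
  have qq: "real q > 0" using q by simp
  define g where "g m = C1 * Nk powr s * (2 * real q) / real m
      + \<bar>C\<bar> * Nk powr s / real q powr s * \<bar>(real (m div q) * real q / real m) powr s - 1\<bar>" for m :: nat
  have g0: "g \<longlonglongrightarrow> 0"
  proof -
    have t1: "(\<lambda>m. C1 * Nk powr s * (2 * real q) / real m) \<longlonglongrightarrow> 0" by (rule lim_const_over_n)
    have "(\<lambda>m. (real (m div q) * real q / real m) powr s) \<longlonglongrightarrow> 1 powr s"
      by (rule tendsto_powr[OF ratio_lim[OF q] tendsto_const]) simp
    then have "(\<lambda>m. (real (m div q) * real q / real m) powr s - 1) \<longlonglongrightarrow> 0"
      by (simp add: LIM_zero_iff)
    then have "(\<lambda>m. \<bar>(real (m div q) * real q / real m) powr s - 1\<bar>) \<longlonglongrightarrow> 0"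
      by (rule tendsto_rabs_zero)
    then have t2: "(\<lambda>m. \<bar>C\<bar> * Nk powr s / real q powr s * \<bar>(real (m div q) * real q / real m) powr s - 1\<bar>) \<longlonglongrightarrow> 0"
      by (rule tendsto_mult_right_zero)
    show ?thesis unfolding g_def using tendsto_add_zero[OF t1 t2] .
  qed
  show ?thesis
  proof (rule Lim_null_comparison[OF _ g0])
    define J where "J = 2 + nat \<lceil>R1\<rceil> + nat \<lceil>R\<rceil>"
    show "\<forall>\<^sub>F m in sequentially. norm (h (GG L (\<lambda>i. \<lfloor>real m * real_of_int (k i) / real q\<rfloor>)) / real m powr s
        - (h (GG L (\<lambda>i. int (m div q) * k i)) / real (m div q) powr s) / real q powr s) \<le> g m"
    proof (rule eventually_sequentiallyI[of "J * q"])
      fix m assume mJ: "J * q \<le> m"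
      define j where "j = m div q"
      define a where "a = (\<lambda>i. int j * k i)"
      define b where "b = (\<lambda>i. \<lfloor>real m * real_of_int (k i) / real q\<rfloor>)"
      have jJ: "J \<le> j" unfolding j_def using div_ge_nat[OF q mJ] .
      have j2: "real j \<ge> 2" "real j \<ge> R1" "real j \<ge> R" using jJ unfolding J_def by linarith+
      have jb: "real j * real q \<le> real m" "real m < real j * real q + real q"
        using div_real_bounds[OF q, of m] unfolding j_def by auto
      have m2q: "real m \<ge> 2 * real q"
      proof -
        have "2 * q \<le> J * q" unfolding J_def by simp
        then show ?thesis using mJ by (metis le_trans of_nat_le_iff of_nat_mult of_nat_numeral)
      qed
      have j0: "real j > 0" using j2 by simp
      have m0: "real m > 0" using m2q qq by simp
      have jm: "real j \<le> real m" unfolding j_def by simp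
      have Na: "Nn a = real j * Nk" unfolding a_def Nk_def by (rule Nn_scale)
      have ddb: "real_of_int (dd b a) \<le> Nk"
      proof -
        have "dd b a \<le> (\<Sum>i\<in>UNIV. \<bar>k i\<bar>)" unfolding dd_def
          by (intro sum_mono) (simp add: a_def b_def j_def floor_rat_bound[OF q])
        then show ?thesis unfolding Nk_def Nn_int by (simp only: of_int_le_iff)
      qed
      have Nkp: "Nk > 0" using Nk1 by simp
      have NaR1: "Nn a \<ge> R1" unfolding Na using j2 Nk1 by (smt (verit) mult_le_cancel_left1)
      have NaR: "Nn a \<ge> R" unfolding Na using j2 Nk1 by (smt (verit) mult_le_cancel_left1)
      have Na2: "Nn a \<ge> 2 * real_of_int (dd b a)"
      proof -
        have "2 * Nk \<le> real j * Nk" using j2 Nkp by (intro mult_right_mono) auto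
        then show ?thesis unfolding Na using ddb by linarith
      qed
      have T1: "\<bar>h (GG L b) - h (GG L a)\<bar> / real m powr s \<le> C1 * Nk powr s * (2 * real q) / real m"
      proof -
        have "\<bar>h (GG L b) - h (GG L a)\<bar> \<le> C1 * real_of_int (dd b a) * Nn a powr (s-1)"
          using lip[OF NaR1 Na2] .
        also have "\<dots> \<le> C1 * Nk * Nn a powr (s-1)"
          using ddb C1 by (intro mult_right_mono mult_left_mono) auto
        also have "\<dots> = C1 * Nk powr s * real j powr (s - 1)"
          unfolding Na using Nkp j0 by (simp add: powr_mult powr_diff field_simps)
        finally have A: "\<bar>h (GG L b) - h (GG L a)\<bar> \<le> C1 * Nk powr s * real j powr (s - 1)" .
        have "\<bar>h (GG L b) - h (GG L a)\<bar> / real m powr s \<le> C1 * Nk powr s * real j powr (s - 1) / real m powr s"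
          using A m0 by (simp add: divide_right_mono)
        also have "\<dots> \<le> C1 * Nk powr s * real j powr (s - 1) / real j powr s"
          using j0 jm s_pos C1 by (intro divide_left_mono mult_nonneg_nonneg powr_mono2) auto
        also have "\<dots> = C1 * Nk powr s / real j"
          using j0 by (simp add: powr_diff)
        also have "\<dots> \<le> C1 * Nk powr s * (2 * real q) / real m"
        proof -
          have "real m \<le> 2 * (real j * real q)" using jb m2q by linarith
          then have "1 / real j \<le> 2 * real q / real m" using j0 m0 by (simp add: field_simps)
          then have "C1 * Nk powr s * (1 / real j) \<le> C1 * Nk powr s * (2 * real q / real m)"
            using C1 by (intro mult_left_mono) auto
          then show ?thesis by simp
        qed
        finally show ?thesis .
      qed
      have T2: "\<bar>h (GG L a) / real m powr s - (h (GG L a) / real j powr s) / real q powr s\<bar>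
          \<le> \<bar>C\<bar> * Nk powr s / real q powr s * \<bar>(real j * real q / real m) powr s - 1\<bar>"
      proof -
        have e: "h (GG L a) / real m powr s - (h (GG L a) / real j powr s) / real q powr s
            = (h (GG L a) / (real j powr s * real q powr s)) * ((real j * real q / real m) powr s - 1)"
          using j0 qq m0 by (simp add: powr_divide powr_mult field_simps)
        have "\<bar>h (GG L a)\<bar> \<le> C * Nn a powr s" using gr[OF NaR] .
        also have "\<dots> = C * (real j powr s * Nk powr s)" unfolding Na using j0 Nkp by (simp add: powr_mult)
        also have "\<dots> \<le> \<bar>C\<bar> * (real j powr s * Nk powr s)"
          by (rule mult_right_mono[OF abs_ge_self]) simp
        finally have "\<bar>h (GG L a)\<bar> \<le> \<bar>C\<bar> * (real j powr s * Nk powr s)" .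
        then have B: "\<bar>h (GG L a) / (real j powr s * real q powr s)\<bar> \<le> \<bar>C\<bar> * Nk powr s / real q powr s"
          using j0 qq by (simp add: abs_div divide_right_mono field_simps)
        show ?thesis unfolding e abs_mult
          by (rule mult_right_mono[OF B]) simp
      qed
      have "norm (h (GG L b) / real m powr s - (h (GG L a) / real j powr s) / real q powr s)
          \<le> \<bar>h (GG L b) - h (GG L a)\<bar> / real m powr s
            + \<bar>h (GG L a) / real m powr s - (h (GG L a) / real j powr s) / real q powr s\<bar>"
      proof -
        have eq: "h (GG L b) / real m powr s - (h (GG L a) / real j powr s) / real q powr s
          = (h (GG L b) - h (GG L a)) / real m powr s
            + (h (GG L a) / real m powr s - (h (GG L a) / real j powr s) / real q powr s)"
          by (simp add: diff_divide_distrib)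
        have "\<bar>(h (GG L b) - h (GG L a)) / real m powr s
            + (h (GG L a) / real m powr s - (h (GG L a) / real j powr s) / real q powr s)\<bar>
          \<le> \<bar>(h (GG L b) - h (GG L a)) / real m powr s\<bar>
            + \<bar>h (GG L a) / real m powr s - (h (GG L a) / real j powr s) / real q powr s\<bar>"
          by (rule abs_triangle_ineq)
        moreover have "\<bar>(h (GG L b) - h (GG L a)) / real m powr s\<bar> = \<bar>h (GG L b) - h (GG L a)\<bar> / real m powr s"
          using m0 by (simp add: abs_div)
        ultimately show ?thesis unfolding real_norm_def eq by simp
      qed
      also have "\<dots> \<le> g m" unfolding g_def j_def[symmetric] using T1 T2 by linarith
      finally show "norm (h (GG L (\<lambda>i. \<lfloor>real m * real_of_int (k i) / real q\<rfloor>)) / real m powr s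
        - (h (GG L (\<lambda>i. int (m div q) * k i)) / real (m div q) powr s) / real q powr s) \<le> g m"
        unfolding a_def b_def j_def .
    qed
  qed
qed

end

locale A5h = A5 h s L for h :: "'p::ab_group_add \<Rightarrow> real" and s and L :: "'n::finite \<Rightarrow> 'p" +
  fixes hhat :: "real ^ 'n \<Rightarrow> real"
  assumes hint: "\<And>k. LSP (\<lambda>m. h (GG L (\<lambda>i. int m * k i)) / real m powr s) (hhat (\<chi> i. real_of_int (k i)))"
    and hom: "\<And>t x. t \<ge> 0 \<Longrightarrow> hhat (t *\<^sub>R x) = t powr s * hhat x"
    and cont: "continuous_on UNIV hhat"
begin

definition ff :: "nat \<Rightarrow> real ^ 'n \<Rightarrow> real" where
  "ff m x = h (GG L (\<lambda>i. \<lfloor>real m * x $ i\<rfloor>)) / real m powr s"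

lemma hhat0: "hhat 0 = 0"
  using hom[of 0 0] s_pos by simp

lemma ff_rat: "ff m ((1 / real q) *\<^sub>R (\<chi> i. real_of_int (k i))) =
   h (GG L (\<lambda>i. \<lfloor>real m * real_of_int (k i) / real q\<rfloor>)) / real m powr s"
  unfolding ff_def by simp

lemma hhat_rat: "q > 0 \<Longrightarrow> hhat ((1 / real q) *\<^sub>R (\<chi> i. real_of_int (k i))) = hhat (\<chi> i. real_of_int (k i)) / real q powr s"
  by (subst hom) (auto simp: powr_divide)

lemma ff_int: "ff m (\<chi> i. real_of_int (k i)) = h (GG L (\<lambda>i. int m * k i)) / real m powr s"
proof -
  have "\<lfloor>real m * real_of_int (k i)\<rfloor> = int m * k i" for i
    by (metis floor_of_int of_int_mult of_int_of_nat_eq)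
  then show ?thesis unfolding ff_def by simp
qed

lemma ff_zero: "Nx x = 0 \<Longrightarrow> x = 0 \<and> (\<lambda>m. ff m x) \<longlonglongrightarrow> hhat x"
proof -
  assume "Nx x = 0"
  then have "\<forall>i\<in>UNIV. \<bar>x $ i\<bar> = 0" unfolding Nx_def by (subst (asm) sum_nonneg_eq_0_iff) auto
  then have x0: "x = 0" by (simp add: vec_eq_iff)
  have "ff m x = h 0 / real m powr s" for m unfolding ff_def x0 by (simp add: GG_zero)
  then show ?thesis using lim_const_powr[OF s_pos, of "h 0"] x0 hhat0 by simp
qed

lemma lim0_rat:
  assumes q: "q > 0"
  shows "(\<lambda>m. ff m ((1 / real q) *\<^sub>R (\<chi> i. real_of_int (k i)))
     - (h (GG L (\<lambda>i. int (m div q) * k i)) / real (m div q) powr s) / real q powr s) \<longlonglongrightarrow> 0"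
  unfolding ff_rat using ratR[OF q, of k] .

lemma LSP_rat:
  assumes q: "q > 0"
  shows "LSP (\<lambda>m. ff m ((1 / real q) *\<^sub>R (\<chi> i. real_of_int (k i)))) (hhat ((1 / real q) *\<^sub>R (\<chi> i. real_of_int (k i))))"
proof (rule LSP_approx)
  fix e :: real assume e: "e > 0"
  define y where "y = (1 / real q) *\<^sub>R (\<chi> i. real_of_int (k i))"
  define v where "v m = (h (GG L (\<lambda>i. int (m div q) * k i)) / real (m div q) powr s) / real q powr s" for m
  define H0 where "H0 = hhat (\<chi> i. real_of_int (k i)) / real q powr s"
  have qs: "real q powr s > 0" using q by simp
  have L1: "LSP (\<lambda>m. h (GG L (\<lambda>i. int (m div q) * k i)) / real (m div q) powr s) (hhat (\<chi> i. real_of_int (k i)))"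
    by (rule LSP_reindex[OF q hint])
  have Lv: "LSP v H0" unfolding v_def H0_def by (rule LSP_div[OF qs L1])
  have lim0: "(\<lambda>m. ff m y - v m) \<longlonglongrightarrow> 0" unfolding y_def v_def by (rule lim0_rat[OF q])
  obtain M where M: "\<forall>m\<ge>M. norm (ff m y - v m - 0) < e"
    using LIMSEQ_D[OF lim0 e] by blast
  have M': "\<forall>m\<ge>M. \<bar>ff m y - v m\<bar> \<le> e" using M by auto
  have H: "\<bar>H0 - hhat y\<bar> \<le> e" unfolding H0_def y_def hhat_rat[OF q] using e by simp
  have "\<bar>H0 - hhat y\<bar> \<le> e \<and> LSP v H0 \<and> (\<exists>M. \<forall>m\<ge>M. \<bar>ff m y - v m\<bar> \<le> e)"
    using H Lv M' by blast
  then show "\<exists>v H'. \<bar>H' - hhat ((1 / real q) *\<^sub>R (\<chi> i. real_of_int (k i)))\<bar> \<le> e \<and> LSP v H' \<and>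
      (\<exists>M. \<forall>m\<ge>M. \<bar>ff m ((1 / real q) *\<^sub>R (\<chi> i. real_of_int (k i))) - v m\<bar> \<le> e)"
    unfolding y_def by (intro exI)
qed

lemma lim_rat:
  assumes q: "q > 0" and lim: "(\<lambda>m. ff m (\<chi> i. real_of_int (k i))) \<longlonglongrightarrow> hhat (\<chi> i. real_of_int (k i))"
  shows "(\<lambda>m. ff m ((1 / real q) *\<^sub>R (\<chi> i. real_of_int (k i)))) \<longlonglongrightarrow> hhat ((1 / real q) *\<^sub>R (\<chi> i. real_of_int (k i)))"
proof -
  define y where "y = (1 / real q) *\<^sub>R (\<chi> i. real_of_int (k i))"
  define v where "v m = (h (GG L (\<lambda>i. int (m div q) * k i)) / real (m div q) powr s) / real q powr s" for m
  have l1: "(\<lambda>m. h (GG L (\<lambda>i. int m * k i)) / real m powr s) \<longlonglongrightarrow> hhat (\<chi> i. real_of_int (k i))"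
    using lim unfolding ff_int .
  have l2: "(\<lambda>m. h (GG L (\<lambda>i. int (m div q) * k i)) / real (m div q) powr s) \<longlonglongrightarrow> hhat (\<chi> i. real_of_int (k i))"
    by (rule lim_reindex[OF q l1])
  have qs: "real q powr s \<noteq> 0" using q by simp
  have l3: "v \<longlonglongrightarrow> hhat (\<chi> i. real_of_int (k i)) / real q powr s"
    unfolding v_def by (rule tendsto_divide[OF l2 tendsto_const qs])
  have lim0: "(\<lambda>m. ff m y - v m) \<longlonglongrightarrow> 0" unfolding y_def v_def by (rule lim0_rat[OF q])
  have "(\<lambda>m. (ff m y - v m) + v m) \<longlonglongrightarrow> 0 + hhat (\<chi> i. real_of_int (k i)) / real q powr s"
    by (rule tendsto_add[OF lim0 l3])
  then show ?thesis using hhat_rat[OF q] unfolding y_def by simp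
qed

lemma approx_pt:
  assumes X: "Nx x > 0" and S: "open S" "x \<in> closure S" and e: "e > 0"
  shows "\<exists>k q. q > 0 \<and> (1 / real q) *\<^sub>R (\<chi> i. real_of_int (k i)) \<in> S
     \<and> \<bar>hhat ((1 / real q) *\<^sub>R (\<chi> i. real_of_int (k i))) - hhat x\<bar> \<le> e
     \<and> (\<exists>M. \<forall>m\<ge>M. \<bar>ff m x - ff m ((1 / real q) *\<^sub>R (\<chi> i. real_of_int (k i)))\<bar> \<le> e)"
proof -
  obtain K where K0: "K \<ge> 0" and K: "\<And>y. dx x y \<le> Nx x / 4 \<Longrightarrow> \<exists>M. \<forall>m\<ge>M.
     \<bar>h (GG L (\<lambda>i. \<lfloor>real m * x $ i\<rfloor>)) / real m powr s - h (GG L (\<lambda>i. \<lfloor>real m * y $ i\<rfloor>)) / real m powr s\<bar>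
       \<le> K * dx x y + K / real m"
    using contC[OF X] by blast
  obtain \<delta> where \<delta>: "\<delta> > 0" "\<And>y. dist y x < \<delta> \<Longrightarrow> dist (hhat y) (hhat x) < e"
    using cont e unfolding continuous_on_iff by blast
  define n where "n = real CARD('n)"
  have n1: "n \<ge> 1" unfolding n_def by simp
  define \<rho> where "\<rho> = min \<delta> (min (Nx x / 4) (e / (2 * (K + 1))))"
  have \<rho>0: "\<rho> > 0" unfolding \<rho>_def using \<delta> X e K0 by simp
  have "\<rho> / (2 * n) > 0" using \<rho>0 n1 by simp
  then obtain z where z: "z \<in> S" "dist z x < \<rho> / (2 * n)"
    using S(2) unfolding closure_approachable by blast
  obtain r where r: "r > 0" "ball z r \<subseteq> S" using S(1) z(1) unfolding open_contains_ball by blast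
  define t where "t = min r (\<rho> / 2)"
  have t0: "t > 0" unfolding t_def using r \<rho>0 by simp
  define q where "q = nat \<lceil>n / t\<rceil> + 1"
  have q0: "q > 0" unfolding q_def by simp
  have "real q > n / t" unfolding q_def by linarith
  then have nq: "n / real q < t" using t0 q0 by (simp add: field_simps)
  define k where "k i = \<lfloor>real q * z $ i\<rfloor>" for i
  define y where "y = (1 / real q) *\<^sub>R (\<chi> i. real_of_int (k i))"
  have yz: "\<bar>y $ i - z $ i\<bar> \<le> 1 / real q" for i
  proof -
    have "real_of_int (k i) \<le> real q * z $ i" "real q * z $ i < real_of_int (k i) + 1"
      unfolding k_def by linarith+
    then have A: "\<bar>real_of_int (k i) - real q * z $ i\<bar> \<le> 1" by (simp only: abs_le_iff) linarith
    have "y $ i - z $ i = (real_of_int (k i) - real q * z $ i) / real q" unfolding y_def using q0 by (simp add: field_simps)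
    then show ?thesis using A q0 by (simp add: abs_div divide_right_mono)
  qed
  have syz: "(\<Sum>i\<in>UNIV. \<bar>y $ i - z $ i\<bar>) \<le> n / real q"
  proof -
    have "(\<Sum>i\<in>UNIV. \<bar>y $ i - z $ i\<bar>) \<le> (\<Sum>i\<in>(UNIV::'n set). 1 / real q)" by (intro sum_mono yz)
    then show ?thesis unfolding n_def by simp
  qed
  have "dist y z \<le> (\<Sum>i\<in>UNIV. \<bar>y $ i - z $ i\<bar>)"
    unfolding dist_norm using norm_le_l1_cart[of "y - z"] by simp
  then have "dist y z < r" using syz nq unfolding t_def by linarith
  then have yS: "y \<in> S" using r(2) by (auto simp: dist_commute)
  have dxy: "dx x y < \<rho>"
  proof -
    have "dx x y \<le> (\<Sum>i\<in>UNIV. \<bar>x $ i - z $ i\<bar> + \<bar>y $ i - z $ i\<bar>)"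
      unfolding dx_def
    proof (intro sum_mono)
      fix i
      show "\<bar>x $ i - y $ i\<bar> \<le> \<bar>x $ i - z $ i\<bar> + \<bar>y $ i - z $ i\<bar>"
        using abs_triangle_ineq4[of "x $ i - z $ i" "y $ i - z $ i"] by simp
    qed
    also have "\<dots> = (\<Sum>i\<in>UNIV. \<bar>x $ i - z $ i\<bar>) + (\<Sum>i\<in>UNIV. \<bar>y $ i - z $ i\<bar>)" by (rule sum.distrib)
    also have "(\<Sum>i\<in>UNIV. \<bar>x $ i - z $ i\<bar>) \<le> (\<Sum>i\<in>(UNIV::'n set). dist z x)"
    proof (intro sum_mono)
      fix i
      show "\<bar>x $ i - z $ i\<bar> \<le> dist z x"
        using component_le_norm_cart[of "x - z" i] by (simp add: dist_norm norm_minus_commute)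
    qed
    also have "\<dots> = n * dist z x" unfolding n_def by simp
    also have "n * dist z x < \<rho> / 2" using z(2) n1 by (simp add: field_simps)
    finally show ?thesis using syz nq unfolding t_def by linarith
  qed
  have dyx: "dist y x < \<delta>"
  proof -
    have "dist y x \<le> (\<Sum>i\<in>UNIV. \<bar>(y - x) $ i\<bar>)" unfolding dist_norm by (rule norm_le_l1_cart)
    also have "\<dots> = dx x y" unfolding dx_def by (intro sum.cong) auto
    finally show ?thesis using dxy unfolding \<rho>_def by linarith
  qed
  have hh: "\<bar>hhat y - hhat x\<bar> \<le> e" using \<delta>(2)[OF dyx] by (simp add: dist_real_def)
  have "dx x y \<le> Nx x / 4" using dxy unfolding \<rho>_def by linarith
  from K[OF this] obtain M where M0: "\<forall>m\<ge>M.
     \<bar>h (GG L (\<lambda>i. \<lfloor>real m * x $ i\<rfloor>)) / real m powr s - h (GG L (\<lambda>i. \<lfloor>real m * y $ i\<rfloor>)) / real m powr s\<bar>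
       \<le> K * dx x y + K / real m" by (elim exE)
  then have M: "\<forall>m\<ge>M. \<bar>ff m x - ff m y\<bar> \<le> K * dx x y + K / real m"
    unfolding ff_def .
  have Kd: "K * dx x y \<le> e / 2"
  proof -
    have "dx x y \<le> e / (2 * (K + 1))" using dxy unfolding \<rho>_def by linarith
    then have "K * dx x y \<le> K * (e / (2 * (K + 1)))" using K0 by (rule mult_left_mono)
    also have "\<dots> = (e / 2) * (K / (K + 1))" by simp
    also have "K / (K + 1) \<le> 1" using K0 by simp
    then have "(e / 2) * (K / (K + 1)) \<le> (e / 2) * 1" using e by (intro mult_left_mono) auto
    finally show ?thesis by simp
  qed
  define M2 where "M2 = max M (nat \<lceil>2 * K / e\<rceil> + 1)"
  have "\<forall>m\<ge>M2. \<bar>ff m x - ff m y\<bar> \<le> e"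
  proof (intro allI impI)
    fix m assume m: "M2 \<le> m"
    then have m1: "real m \<ge> 2 * K / e + 1" unfolding M2_def by linarith
    have "2 * K / e \<ge> 0" using K0 e by simp
    then have mp: "real m > 0" using m1 by linarith
    have "2 * K / e \<le> real m" using m1 by linarith
    then have "2 * K \<le> real m * e" using e by (simp add: pos_divide_le_eq)
    then have "K / real m \<le> e / 2" using mp by (simp add: field_simps)
    moreover have "M \<le> m" using m unfolding M2_def by simp
    then have "\<bar>ff m x - ff m y\<bar> \<le> K * dx x y + K / real m" using M by blast
    ultimately show "\<bar>ff m x - ff m y\<bar> \<le> e" using Kd by linarith
  qed
  then show ?thesis using q0 yS hh unfolding y_def by blast
qed

lemma part1: "LSP (\<lambda>m. ff m x) (hhat x)"
proof (cases "Nx x = 0")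
  case True then show ?thesis using ff_zero LSP_tendsto by blast
next
  case False
  then have X: "Nx x > 0" unfolding Nx_def by (simp add: sum_nonneg order_less_le)
  show ?thesis
  proof (rule LSP_approx)
    fix e :: real assume e: "e > 0"
    obtain k q where kq: "q > 0" "\<bar>hhat ((1 / real q) *\<^sub>R (\<chi> i. real_of_int (k i))) - hhat x\<bar> \<le> e"
      "\<exists>M. \<forall>m\<ge>M. \<bar>ff m x - ff m ((1 / real q) *\<^sub>R (\<chi> i. real_of_int (k i)))\<bar> \<le> e"
      using approx_pt[OF X open_UNIV _ e] by auto
    then show "\<exists>v H'. \<bar>H' - hhat x\<bar> \<le> e \<and> LSP v H' \<and> (\<exists>M. \<forall>m\<ge>M. \<bar>ff m x - v m\<bar> \<le> e)"
      using LSP_rat[OF kq(1), of k] by blast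
  qed
qed

lemma part2:
  assumes S: "open S" and cone: "\<And>x c. x \<in> S \<Longrightarrow> c > 0 \<Longrightarrow> c *\<^sub>R x \<in> S"
    and intlim: "\<And>x. x \<in> S \<Longrightarrow> (\<forall>i. x $ i \<in> \<int>) \<Longrightarrow> (\<lambda>m. ff m x) \<longlonglongrightarrow> hhat x"
    and x: "x \<in> closure S"
  shows "(\<lambda>m. ff m x) \<longlonglongrightarrow> hhat x"
proof (cases "Nx x = 0")
  case True then show ?thesis using ff_zero by blast
next
  case False
  then have X: "Nx x > 0" unfolding Nx_def by (simp add: sum_nonneg order_less_le)
  show ?thesis
  proof (rule lim_approx)
    fix e :: real assume e: "e > 0"
    obtain k q where kq: "q > 0" "(1 / real q) *\<^sub>R (\<chi> i. real_of_int (k i)) \<in> S"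
      "\<bar>hhat ((1 / real q) *\<^sub>R (\<chi> i. real_of_int (k i))) - hhat x\<bar> \<le> e"
      "\<exists>M. \<forall>m\<ge>M. \<bar>ff m x - ff m ((1 / real q) *\<^sub>R (\<chi> i. real_of_int (k i)))\<bar> \<le> e"
      using approx_pt[OF X S x e] by auto
    have eqv: "real q *\<^sub>R ((1 / real q) *\<^sub>R (\<chi> i. real_of_int (k i))) = (\<chi> i. real_of_int (k i))"
      using kq(1) by simp
    have "real q *\<^sub>R ((1 / real q) *\<^sub>R (\<chi> i. real_of_int (k i))) \<in> S"
      by (rule cone[OF kq(2)]) (use kq(1) in simp)
    then have kS: "(\<chi> i. real_of_int (k i)) \<in> S" unfolding eqv .
    have "(\<lambda>m. ff m (\<chi> i. real_of_int (k i))) \<longlonglongrightarrow> hhat (\<chi> i. real_of_int (k i))"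
      using intlim[OF kS] by simp
    then show "\<exists>v H'. \<bar>H' - hhat x\<bar> \<le> e \<and> v \<longlonglongrightarrow> H' \<and> (\<exists>M. \<forall>m\<ge>M. \<bar>ff m x - v m\<bar> \<le> e)"
      using lim_rat[OF kq(1)] kq(3,4) by blast
  qed
qed

end

theorem propositionA5:
  fixes h :: "'p::ab_group_add \<Rightarrow> real" and s :: real
    and L :: "'n::finite \<Rightarrow> 'p" and hhat :: "real ^ 'n \<Rightarrow> real"
  assumes s_pos: "s > 0"
    and growth: "\<And>r (Ls :: nat \<Rightarrow> 'p). \<exists>C R. \<forall>m.
          znorm1 r m \<ge> R \<longrightarrow> \<bar>h (zlincomb r m Ls)\<bar> \<le> C * znorm1 r m powr s"
    and diff: "\<And>r (Ls :: nat \<Rightarrow> 'p) L0. \<exists>C R. \<forall>m.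
          znorm1 r m \<ge> R \<longrightarrow>
            \<bar>h (L0 + zlincomb r m Ls) - h (zlincomb r m Ls)\<bar> \<le> C * znorm1 r m powr (s - 1)"
    and hhat_int: "\<And>k :: 'n \<Rightarrow> int.
          ereal (hhat (\<chi> i. real_of_int (k i))) =
          limsup (\<lambda>m::nat. ereal (h (zsmult (int m) (\<Sum>i\<in>UNIV. zsmult (k i) (L i))) / real m powr s))"
    and hhat_hom: "\<And>t x. t \<ge> 0 \<Longrightarrow> hhat (t *\<^sub>R x) = t powr s * hhat x"
    and hhat_cont: "continuous_on UNIV hhat"
  shows "(\<forall>x :: real ^ 'n. ereal (hhat x) =
            limsup (\<lambda>m::nat. ereal (h (\<Sum>i\<in>UNIV. zsmult \<lfloor>real m * x $ i\<rfloor> (L i)) / real m powr s)))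
       \<and> (\<forall>\<sigma> :: (real ^ 'n) set. open_convex_cone \<sigma> \<longrightarrow>
            (\<forall>x\<in>\<sigma>. (\<forall>i. x $ i \<in> \<int>) \<longrightarrow>
               (\<lambda>m::nat. h (\<Sum>i\<in>UNIV. zsmult \<lfloor>real m * x $ i\<rfloor> (L i)) / real m powr s)
                 \<longlonglongrightarrow> hhat x) \<longrightarrow>
            (\<forall>x\<in>closure \<sigma>.
               (\<lambda>m::nat. h (\<Sum>i\<in>UNIV. zsmult \<lfloor>real m * x $ i\<rfloor> (L i)) / real m powr s)
                 \<longlonglongrightarrow> hhat x))"
  proof -
  obtain e :: "nat \<Rightarrow> 'n" where
    e1: "\<And>(L'::'n \<Rightarrow> 'p) a. zlincomb CARD('n) (a \<circ> e) (L' \<circ> e) = GG L' a" and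
    e2: "\<And>a. znorm1 CARD('n) (a \<circ> e) = Nn a"
    using enum_transfer by blast
  have growthG: "\<exists>C R. \<forall>a. Nn a \<ge> R \<longrightarrow> \<bar>h (GG L a)\<bar> \<le> C * Nn a powr s"
  proof -
    obtain C R where CR: "\<forall>m. znorm1 CARD('n) m \<ge> R \<longrightarrow> \<bar>h (zlincomb CARD('n) m (L \<circ> e))\<bar> \<le> C * znorm1 CARD('n) m powr s"
      using growth by blast
    have "\<forall>a. Nn a \<ge> R \<longrightarrow> \<bar>h (GG L a)\<bar> \<le> C * Nn a powr s"
    proof (intro allI impI)
      fix a :: "'n \<Rightarrow> int" assume "Nn a \<ge> R"
      then show "\<bar>h (GG L a)\<bar> \<le> C * Nn a powr s" using CR[rule_format, of "a \<circ> e"] unfolding e1 e2 by simp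
    qed
    then show ?thesis by blast
  qed
  have diffG: "\<exists>C R. \<forall>a. Nn a \<ge> R \<longrightarrow> \<bar>h (L0 + GG L a) - h (GG L a)\<bar> \<le> C * Nn a powr (s - 1)" for L0
  proof -
    obtain C R where CR: "\<forall>m. znorm1 CARD('n) m \<ge> R \<longrightarrow>
        \<bar>h (L0 + zlincomb CARD('n) m (L \<circ> e)) - h (zlincomb CARD('n) m (L \<circ> e))\<bar> \<le> C * znorm1 CARD('n) m powr (s - 1)"
      using diff by blast
    have "\<forall>a. Nn a \<ge> R \<longrightarrow> \<bar>h (L0 + GG L a) - h (GG L a)\<bar> \<le> C * Nn a powr (s - 1)"
    proof (intro allI impI)
      fix a :: "'n \<Rightarrow> int" assume "Nn a \<ge> R"
      then show "\<bar>h (L0 + GG L a) - h (GG L a)\<bar> \<le> C * Nn a powr (s - 1)"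
        using CR[rule_format, of "a \<circ> e"] unfolding e1 e2 by simp
    qed
    then show ?thesis by blast
  qed
  interpret A5 h s L
    by unfold_locales (rule s_pos, rule growthG, rule diffG)
  have hint: "LSP (\<lambda>m. h (GG L (\<lambda>i. int m * k i)) / real m powr s) (hhat (\<chi> i. real_of_int (k i)))" for k
  proof -
    have "limsup (\<lambda>m. ereal (h (GG L (\<lambda>i. int m * k i)) / real m powr s)) = ereal (hhat (\<chi> i. real_of_int (k i)))"
      by (simp only: hhat_int GG_mult)
    then show ?thesis by (simp add: LSP_limsup)
  qed
  interpret A5h h s L hhat
    by unfold_locales (rule hint, rule hhat_hom, assumption, rule hhat_cont)
  have ffeq: "h (\<Sum>i\<in>UNIV. zsmult \<lfloor>real m * x $ i\<rfloor> (L i)) / real m powr s = ff m x" for m x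
    by (simp add: ff_def GG_def)
  show ?thesis
  proof (intro conjI allI impI ballI)
    fix x :: "real ^ 'n"
    have "limsup (\<lambda>m. ereal (ff m x)) = ereal (hhat x)" using part1[of x] by (simp add: LSP_limsup)
    then show "ereal (hhat x) =
            limsup (\<lambda>m::nat. ereal (h (\<Sum>i\<in>UNIV. zsmult \<lfloor>real m * x $ i\<rfloor> (L i)) / real m powr s))"
      by (simp add: ffeq)
  next
    fix \<sigma> :: "(real ^ 'n) set" and x
    assume occ: "open_convex_cone \<sigma>"
      and hyp: "\<forall>x\<in>\<sigma>. (\<forall>i. x $ i \<in> \<int>) \<longrightarrow>
               (\<lambda>m::nat. h (\<Sum>i\<in>UNIV. zsmult \<lfloor>real m * x $ i\<rfloor> (L i)) / real m powr s) \<longlonglongrightarrow> hhat x"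
      and x: "x \<in> closure \<sigma>"
    have "(\<lambda>m. ff m x) \<longlonglongrightarrow> hhat x"
    proof (rule part2[OF _ _ _ x])
      show "open \<sigma>" using occ unfolding open_convex_cone_def by blast
      show "c *\<^sub>R y \<in> \<sigma>" if "y \<in> \<sigma>" "c > 0" for y c using occ that unfolding open_convex_cone_def by blast
      show "(\<lambda>m. ff m y) \<longlonglongrightarrow> hhat y" if "y \<in> \<sigma>" "\<forall>i. y $ i \<in> \<int>" for y
        using hyp that unfolding ffeq by blast
    qed
    then show "(\<lambda>m::nat. h (\<Sum>i\<in>UNIV. zsmult \<lfloor>real m * x $ i\<rfloor> (L i)) / real m powr s) \<longlonglongrightarrow> hhat x"
      unfolding ffeq .
  qed
qed

end
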